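(* Let $r\ge 3$ and let $G$ be a connected $r$-regular graph. Let $G'$ be the graph with vertex set $V(G)$ in which two distinct vertices are adjacent iff they have a common neighbor in $G$. If $G'$ has a connected component that is a complete graph on $r(r-1)+1$ vertices, then $G$ is the incidence graph of a projective plane of order $r-1$.
   Context: All graphs are finite and simple. A projective plane of order $q$ consists of $q^2+q+1$ points and $q^2+q+1$ lines with an incidence relation such that every line is incident with exactly $q+1$ points, every point with exactly $q+1$ lines, any two distinct points lie on exactly one common line, and any two distinct lines share exactly one common point. Its incidence graph is the bipartite graph whose vertices are the points and the lines, a point being adjacent to a line iff they are incident. *)

theory Defs
  imports Main
begin

definition simple_graph :: "'a set \<Rightarrow> ('a \<Rightarrow> 'a \<Rightarrow> bool) \<Rightarrow> bool" where
  "simple_graph V E \<longleftrightarrow> finite V \<and> (\<forall>u v. E u v \<longrightarrow> u \<in> V \<and> v \<in> V)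
     \<and> (\<forall>u v. E u v \<longrightarrow> E v u) \<and> (\<forall>v. \<not> E v v)"

definition neighbors :: "'a set \<Rightarrow> ('a \<Rightarrow> 'a \<Rightarrow> bool) \<Rightarrow> 'a \<Rightarrow> 'a set" where
  "neighbors V E v = {u \<in> V. E v u}"

definition regular :: "'a set \<Rightarrow> ('a \<Rightarrow> 'a \<Rightarrow> bool) \<Rightarrow> nat \<Rightarrow> bool" where
  "regular V E r \<longleftrightarrow> (\<forall>v\<in>V. card (neighbors V E v) = r)"

definition reachable :: "'a set \<Rightarrow> ('a \<Rightarrow> 'a \<Rightarrow> bool) \<Rightarrow> 'a \<Rightarrow> 'a \<Rightarrow> bool" where
  "reachable V E u v \<longleftrightarrow> u \<in> V \<and> v \<in> V \<and> (\<lambda>x y. x \<in> V \<and> y \<in> V \<and> E x y)\<^sup>*\<^sup>* u v"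

definition connected_graph :: "'a set \<Rightarrow> ('a \<Rightarrow> 'a \<Rightarrow> bool) \<Rightarrow> bool" where
  "connected_graph V E \<longleftrightarrow> V \<noteq> {} \<and> (\<forall>u\<in>V. \<forall>v\<in>V. reachable V E u v)"

definition connected_component :: "'a set \<Rightarrow> ('a \<Rightarrow> 'a \<Rightarrow> bool) \<Rightarrow> 'a set \<Rightarrow> bool" where
  "connected_component V E C \<longleftrightarrow> (\<exists>x\<in>V. C = {y. reachable V E x y})"

definition common_nbr_adj :: "'a set \<Rightarrow> ('a \<Rightarrow> 'a \<Rightarrow> bool) \<Rightarrow> 'a \<Rightarrow> 'a \<Rightarrow> bool" where
  "common_nbr_adj V E u v \<longleftrightarrow> u \<in> V \<and> v \<in> V \<and> u \<noteq> v \<and> (\<exists>w\<in>V. E u w \<and> E w v)"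

definition is_complete_on :: "('a \<Rightarrow> 'a \<Rightarrow> bool) \<Rightarrow> 'a set \<Rightarrow> nat \<Rightarrow> bool" where
  "is_complete_on E C n \<longleftrightarrow> finite C \<and> card C = n \<and> (\<forall>u\<in>C. \<forall>v\<in>C. u \<noteq> v \<longrightarrow> E u v)"

definition projective_plane :: "'p set \<Rightarrow> 'l set \<Rightarrow> ('p \<Rightarrow> 'l \<Rightarrow> bool) \<Rightarrow> nat \<Rightarrow> bool" where
  "projective_plane P L I q \<longleftrightarrow>
     finite P \<and> finite L \<and> card P = q^2 + q + 1 \<and> card L = q^2 + q + 1
     \<and> (\<forall>l\<in>L. card {p\<in>P. I p l} = q + 1)
     \<and> (\<forall>p\<in>P. card {l\<in>L. I p l} = q + 1)
     \<and> (\<forall>p1\<in>P. \<forall>p2\<in>P. p1 \<noteq> p2 \<longrightarrow> (\<exists>!l. l \<in> L \<and> I p1 l \<and> I p2 l))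
     \<and> (\<forall>l1\<in>L. \<forall>l2\<in>L. l1 \<noteq> l2 \<longrightarrow> (\<exists>!p. p \<in> P \<and> I p l1 \<and> I p l2))"

text \<open>Incidence graph: vertices are points (Inl) and lines (Inr).\<close>
definition incidence_vertices :: "'p set \<Rightarrow> 'l set \<Rightarrow> ('p + 'l) set" where
  "incidence_vertices P L = Inl ` P \<union> Inr ` L"

fun incidence_adj :: "'p set \<Rightarrow> 'l set \<Rightarrow> ('p \<Rightarrow> 'l \<Rightarrow> bool) \<Rightarrow> ('p + 'l) \<Rightarrow> ('p + 'l) \<Rightarrow> bool" where
  "incidence_adj P L I (Inl p) (Inr l) = (p \<in> P \<and> l \<in> L \<and> I p l)"
| "incidence_adj P L I (Inr l) (Inl p) = (p \<in> P \<and> l \<in> L \<and> I p l)"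
| "incidence_adj P L I _ _ = False"

definition graph_iso :: "'a set \<Rightarrow> ('a \<Rightarrow> 'a \<Rightarrow> bool) \<Rightarrow> 'b set \<Rightarrow> ('b \<Rightarrow> 'b \<Rightarrow> bool) \<Rightarrow> bool" where
  "graph_iso V E W F \<longleftrightarrow> (\<exists>f. bij_betw f V W \<and> (\<forall>u\<in>V. \<forall>v\<in>V. E u v \<longleftrightarrow> F (f u) (f v)))"

definition is_incidence_graph_of_projective_plane :: "'a set \<Rightarrow> ('a \<Rightarrow> 'a \<Rightarrow> bool) \<Rightarrow> nat \<Rightarrow> bool" where
  "is_incidence_graph_of_projective_plane V E q \<longleftrightarrow>
     (\<exists>(P :: 'a set) (L :: 'a set) I. projective_plane P L I q
        \<and> graph_iso V E (incidence_vertices P L) (incidence_adj P L I))"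

end

theory Submission imports Defs "HOL-Computational_Algebra.Primes" begin


lemma funpow_p_mult:
  assumes "(f^^p) w = w" shows "(f^^(p*y)) w = w"
proof -
  have "((f^^p)^^y) w = w" by (induction y) (simp_all add: assms)
  thus ?thesis by (simp add: funpow_mult)
qed

lemma funpow_mod:
  assumes "(f^^p) w = w" shows "(f^^n) w = (f^^(n mod p)) w"
proof -
  have "(f^^n) w = (f^^(n mod p + p*(n div p))) w" by simp
  also have "\<dots> = (f^^(n mod p)) ((f^^(p*(n div p))) w)" by (simp only: funpow_add o_apply)
  also have "\<dots> = (f^^(n mod p)) w" using funpow_p_mult[OF assms] by simp
  finally show ?thesis .
qed

lemma prime_dvd_card_fpf:
  assumes "finite W" "prime (p::nat)" "\<forall>w\<in>W. f w \<in> W" "\<forall>w\<in>W. (f^^p) w = w"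
    "\<forall>w\<in>W. f w \<noteq> w"
  shows "p dvd card W"
  using assms
proof (induction "card W" arbitrary: W rule: less_induct)
  case less
  show ?case
  proof (cases "W = {}")
    case True then show ?thesis by simp
  next
    case False
    then obtain w where w: "w \<in> W" by blast
    have p1: "p > 1" using less.prems(2) prime_gt_1_nat by blast
    have fpw: "(f^^p) w = w" using less.prems(4) w by blast
    define Ob where "Ob = (\<lambda>i. (f^^i) w) ` {..<p}"
    have inW: "(f^^i) x \<in> W" if "x \<in> W" for i x
      using that less.prems(3) by (induction i) auto
    have ObW: "Ob \<subseteq> W" using inW w unfolding Ob_def by auto
    have allOb: "(f^^n) w \<in> Ob" for n
      using funpow_mod[OF fpw, of n] p1 unfolding Ob_def by auto
    have inj: "inj_on (\<lambda>i. (f^^i) w) {..<p}"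
    proof (rule ccontr)
      assume "\<not> ?thesis"
      then obtain i j where ij: "i < p" "j < p" "i < j" "(f^^i) w = (f^^j) w"
        unfolding inj_on_def by (metis lessThan_iff nat_neq_iff)
      define d where "d = j - i"
      have "(f^^(p-i)) ((f^^i) w) = (f^^(p-i+i)) w" by (simp only: funpow_add o_apply)
      hence "(f^^(p-i)) ((f^^i) w) = w" using fpw ij by simp
      moreover have "(f^^(p-i)) ((f^^j) w) = (f^^d) w"
      proof -
        have "(f^^(p-i)) ((f^^j) w) = (f^^(p-i+j)) w" by (simp only: funpow_add o_apply)
        also have "p-i+j = d + p" using ij unfolding d_def by simp
        also have "(f^^(d+p)) w = (f^^d) w" using fpw by (simp only: funpow_add o_apply)
        finally show ?thesis .
      qed
      ultimately have fd: "(f^^d) w = w" using ij by simp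
      have d: "0 < d" "d < p" using ij unfolding d_def by auto
      have "coprime d p" using d less.prems(2)
        by (metis coprime_commute nat_dvd_not_less prime_imp_coprime)
      then have "gcd d p = 1" by simp
      then obtain x y where xy: "d * x = p * y + 1" using bezout_nat[of d p] d by auto
      have "(f^^(d*x)) w = w" using funpow_p_mult[OF fd] .
      moreover have "(f^^(p*y+1)) w = f w"
        using funpow_p_mult[OF fpw, of y] by (simp add: funpow_add)
      ultimately have "f w = w" using xy by simp
      thus False using less.prems(5) w by blast
    qed
    have cardOb: "card Ob = p" unfolding Ob_def using inj card_image by fastforce
    have wOb: "w \<in> Ob" using allOb[of 0] by simp
    have clos: "f x \<in> W - Ob" if "x \<in> W - Ob" for x
    proof -
      have "f x \<in> W" using that less.prems(3) by auto
      moreover have "f x \<notin> Ob"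
      proof
        assume "f x \<in> Ob"
        then obtain i where i: "f x = (f^^i) w" unfolding Ob_def by auto
        have "(f^^(p-1)) (f x) = (f^^p) x"
          using p1 by (metis Suc_diff_1 funpow_Suc_right o_apply less_trans zero_less_one)
        also have "\<dots> = x" using that less.prems(4) by auto
        finally have "x = (f^^(p-1+i)) w" using i by (simp add: funpow_add)
        thus False using allOb that by auto
      qed
      ultimately show ?thesis by blast
    qed
    have "W - Ob \<subset> W" using wOb w by blast
    hence lt: "card (W - Ob) < card W" using psubset_card_mono[OF less.prems(1)] by blast
    have "p dvd card (W - Ob)"
      apply (rule less.hyps[OF lt])
      using less.prems(1) apply blast
      using less.prems(2) apply blast
      using clos apply blast
      using less.prems(4) apply blast
      using less.prems(5) apply blast
      done
    moreover have "card W = card Ob + card (W - Ob)"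
      using ObW less.prems(1) card_Diff_subset[of Ob W] card_mono[of W Ob] finite_subset[of Ob W] by simp
    ultimately show ?thesis using cardOb by simp
  qed
qed



fun walk :: "'a set \<Rightarrow> ('a \<Rightarrow> 'a \<Rightarrow> bool) \<Rightarrow> 'a list \<Rightarrow> bool" where
  "walk V E [] = True"
| "walk V E [x] = (x \<in> V)"
| "walk V E (x # y # zs) = (x \<in> V \<and> E x y \<and> walk V E (y # zs))"

lemma walk_set: "walk V E xs \<Longrightarrow> set xs \<subseteq> V"
  by (induction V E xs rule: walk.induct) auto

lemma walk_Cons: "ys \<noteq> [] \<Longrightarrow> walk V E (x # ys) \<longleftrightarrow> x \<in> V \<and> E x (hd ys) \<and> walk V E ys"
  by (cases ys) auto

lemma walk_snoc: "ys \<noteq> [] \<Longrightarrow> walk V E (ys @ [x]) \<longleftrightarrow> walk V E ys \<and> E (last ys) x \<and> x \<in> V"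
proof (induction ys)
  case Nil then show ?case by simp
next
  case (Cons a ys)
  show ?case
  proof (cases "ys = []")
    case True then show ?thesis by simp
  next
    case False
    have "walk V E ((a # ys) @ [x]) = walk V E (a # (ys @ [x]))" by simp
    also have "\<dots> = (a \<in> V \<and> E a (hd ys) \<and> walk V E (ys @ [x]))"
      using walk_Cons[of "ys @ [x]" V E a] False by simp
    also have "\<dots> = (a \<in> V \<and> E a (hd ys) \<and> walk V E ys \<and> E (last ys) x \<and> x \<in> V)"
      using Cons.IH[OF False] by simp
    also have "\<dots> = (walk V E (a # ys) \<and> E (last (a # ys)) x \<and> x \<in> V)"
      using walk_Cons[of ys V E a] False by simp
    finally show ?thesis .
  qed
qed

definition H :: "'a set \<Rightarrow> ('a \<Rightarrow> 'a \<Rightarrow> bool) \<Rightarrow> nat \<Rightarrow> 'a \<Rightarrow> 'a \<Rightarrow> nat" where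
  "H V E l u v = card {xs. length xs = Suc l \<and> walk V E xs \<and> hd xs = u \<and> E (last xs) v}"

lemma finite_walks: "finite V \<Longrightarrow> finite {xs. length xs = n \<and> walk V E xs \<and> P xs}"
proof -
  assume "finite V"
  then have "finite {xs. set xs \<subseteq> V \<and> length xs = n}" by (rule finite_lists_length_eq)
  then show ?thesis by (rule finite_subset[rotated]) (auto dest: walk_set)
qed

context
  fixes V :: "'a set" and E r
  assumes sg: "simple_graph V E" and reg: "regular V E r"
begin

lemma finV: "finite V" using sg unfolding simple_graph_def by auto
lemma EV: "E u v \<Longrightarrow> u \<in> V \<and> v \<in> V" using sg unfolding simple_graph_def by auto
lemma Esym: "E u v \<Longrightarrow> E v u" using sg unfolding simple_graph_def by auto
lemma Eirr: "\<not> E v v" using sg unfolding simple_graph_def by auto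
lemma cardN: "v \<in> V \<Longrightarrow> card (neighbors V E v) = r" using reg unfolding regular_def by auto
lemma finN: "finite (neighbors V E v)" using finV unfolding neighbors_def by auto

lemma H0: "H V E 0 u v = (if E u v then 1 else 0)"
proof -
  have "{xs. length xs = Suc 0 \<and> walk V E xs \<and> hd xs = u \<and> E (last xs) v} =
        {xs. xs = [u] \<and> u \<in> V \<and> E u v}"
  proof (intro set_eqI iffI)
    fix xs assume a: "xs \<in> {xs. length xs = Suc 0 \<and> walk V E xs \<and> hd xs = u \<and> E (last xs) v}"
    then have "length xs = Suc 0" by simp
    then obtain x where "xs = [x]" by (auto simp: length_Suc_conv)
    with a show "xs \<in> {xs. xs = [u] \<and> u \<in> V \<and> E u v}" by auto
  qed simp
  also have "\<dots> = (if E u v then {[u]} else {})" using EV[of u v] by auto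
  finally show ?thesis unfolding H_def by simp
qed

lemma HSuc: "H V E (Suc l) u v = (\<Sum>w\<in>neighbors V E u. H V E l w v)"
proof -
  let ?S = "\<lambda>l u. {xs. length xs = Suc l \<and> walk V E xs \<and> hd xs = u \<and> E (last xs) v}"
  have eq: "?S (Suc l) u = (\<Union>w\<in>neighbors V E u. (Cons u) ` ?S l w)"
  proof (intro set_eqI iffI)
    fix xs assume A: "xs \<in> ?S (Suc l) u"
    then have len: "length xs = Suc (Suc l)" and wk: "walk V E xs" and hd: "hd xs = u"
      and la: "E (last xs) v" by simp_all
    obtain ys where xs: "xs = u # ys" using len hd by (cases xs) auto
    have ys: "ys \<noteq> []" "length ys = Suc l" using len xs by auto
    have w: "u \<in> V" "E u (hd ys)" "walk V E ys" using wk xs walk_Cons[OF ys(1)] by blast+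
    have hn: "hd ys \<in> neighbors V E u" unfolding neighbors_def using EV[OF w(2)] w(2) by simp
    have "ys \<in> ?S l (hd ys)" using ys w la xs by simp
    then have "xs \<in> (Cons u) ` ?S l (hd ys)" using xs by blast
    then show "xs \<in> (\<Union>w\<in>neighbors V E u. (Cons u) ` ?S l w)" using hn by blast
  next
    fix xs assume "xs \<in> (\<Union>w\<in>neighbors V E u. (Cons u) ` ?S l w)"
    then obtain w ys where wn: "w \<in> neighbors V E u" and xs: "xs = u # ys" and ys: "ys \<in> ?S l w" by auto
    have Euw: "E u w" using wn unfolding neighbors_def by simp
    have ne: "ys \<noteq> []" using ys by auto
    have "walk V E (u # ys)" using walk_Cons[OF ne, of V E u] EV[OF Euw] Euw ys by simp
    then show "xs \<in> ?S (Suc l) u" using xs ys ne by simp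
  qed
  have "card (?S (Suc l) u) = (\<Sum>w\<in>neighbors V E u. card ((Cons u) ` ?S l w))"
    unfolding eq
    by (rule card_UN_disjoint) (auto simp: finN finite_walks[OF finV])
  also have "\<dots> = (\<Sum>w\<in>neighbors V E u. card (?S l w))"
    by (rule sum.cong) (auto simp: card_image)
  finally show ?thesis unfolding H_def .
qed

lemma sum_N: "(\<Sum>w\<in>neighbors V E u. f w) = (\<Sum>w\<in>V. if E u w then f w else 0)"
  unfolding neighbors_def using finV by (simp add: sum.inter_filter)

lemma swap1: "(\<Sum>x\<in>V. \<Sum>w\<in>neighbors V E x. (f::'a\<Rightarrow>nat) w) = (\<Sum>w\<in>V. r * f w)"
proof -
  have "(\<Sum>x\<in>V. \<Sum>w\<in>neighbors V E x. f w) = (\<Sum>x\<in>V. \<Sum>w\<in>V. if E x w then f w else 0)"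
    by (simp add: sum_N)
  also have "\<dots> = (\<Sum>w\<in>V. \<Sum>x\<in>V. if E x w then f w else 0)" by (rule sum.swap)
  also have "\<dots> = (\<Sum>w\<in>V. \<Sum>x\<in>neighbors V E w. f w)"
    unfolding sum_N by (intro sum.cong refl) (auto dest: Esym)
  also have "\<dots> = (\<Sum>w\<in>V. r * f w)" by (simp add: cardN)
  finally show ?thesis .
qed

lemma swap2: "(\<Sum>w\<in>neighbors V E u. \<Sum>x\<in>neighbors V E w. (f::'a\<Rightarrow>nat) x)
   = (\<Sum>x\<in>V. card {w\<in>V. E u w \<and> E w x} * f x)"
proof -
  have "(\<Sum>w\<in>neighbors V E u. \<Sum>x\<in>neighbors V E w. f x)
      = (\<Sum>w\<in>V. \<Sum>x\<in>V. if E u w \<and> E w x then f x else 0)"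
    by (simp add: sum_N) (intro sum.cong refl, auto)
  also have "\<dots> = (\<Sum>x\<in>V. \<Sum>w\<in>V. if E u w \<and> E w x then f x else 0)" by (rule sum.swap)
  also have "\<dots> = (\<Sum>x\<in>V. card {w\<in>V. E u w \<and> E w x} * f x)"
  proof (rule sum.cong[OF refl])
    fix x
    have "(\<Sum>w\<in>V. if E u w \<and> E w x then f x else 0) = (\<Sum>w\<in>{w\<in>V. E u w \<and> E w x}. f x)"
      using finV by (rule sum.inter_filter[symmetric])
    then show "(\<Sum>w\<in>V. if E u w \<and> E w x then f x else 0) = card {w\<in>V. E u w \<and> E w x} * f x"
      by simp
  qed
  finally show ?thesis .
qed

lemma colsum: "u \<in> V \<Longrightarrow> (\<Sum>x\<in>V. H V E l x u) = r ^ Suc l"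
proof (induction l)
  case 0
  have "(\<Sum>x\<in>V. H V E 0 x u) = (\<Sum>x\<in>V. if E u x then 1 else 0)"
    unfolding H0 by (intro sum.cong refl) (auto dest: Esym)
  also have "\<dots> = card (neighbors V E u)" using sum_N[where u=u and f="\<lambda>_. 1::nat"] by simp
  finally show ?case using cardN 0 by simp
next
  case (Suc l)
  have "(\<Sum>x\<in>V. H V E (Suc l) x u) = (\<Sum>w\<in>V. r * H V E l w u)" by (simp add: HSuc swap1)
  also have "\<dots> = r * (\<Sum>w\<in>V. H V E l w u)" by (rule sum_distrib_left[symmetric])
  also have "\<dots> = r * r ^ Suc l" using Suc.IH[OF Suc.prems] by (rule arg_cong)
  finally show ?case by (simp only: power_Suc)
qed

end



context
  fixes V :: "'a set" and E r
  assumes sg: "simple_graph V E" and reg: "regular V E r"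
    and fr: "\<forall>u\<in>V. \<forall>x\<in>V. u \<noteq> x \<longrightarrow> card {w\<in>V. E u w \<and> E w x} = 1"
begin

lemma diag:
  assumes u: "u \<in> V"
  shows "H V E (Suc (Suc l)) u u + H V E l u u = r * H V E l u u + r ^ Suc l"
proof -
  let ?h = "\<lambda>x. H V E l x u"
  let ?c = "\<lambda>x. card {w\<in>V. E u w \<and> E w x}"
  have "H V E (Suc (Suc l)) u u = (\<Sum>w\<in>neighbors V E u. \<Sum>x\<in>neighbors V E w. ?h x)"
    by (simp add: HSuc[OF sg reg])
  also have "\<dots> = (\<Sum>x\<in>V. ?c x * ?h x)" by (rule swap2[OF sg reg])
  finally have e1: "H V E (Suc (Suc l)) u u = (\<Sum>x\<in>V. ?c x * ?h x)" .
  have cu: "?c u = r"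
  proof -
    have "{w\<in>V. E u w \<and> E w u} = neighbors V E u"
      unfolding neighbors_def using Esym[OF sg reg] by blast
    then show ?thesis using cardN[OF sg reg u] by simp
  qed
  have fin: "finite V" by (rule finV[OF sg reg])
  have "(\<Sum>x\<in>V. ?c x * ?h x) = ?c u * ?h u + (\<Sum>x\<in>V-{u}. ?c x * ?h x)"
    using sum.remove[OF fin u] by blast
  also have "(\<Sum>x\<in>V-{u}. ?c x * ?h x) = (\<Sum>x\<in>V-{u}. ?h x)"
    by (rule sum.cong) (use fr u in auto)
  finally have e2: "(\<Sum>x\<in>V. ?c x * ?h x) = r * ?h u + (\<Sum>x\<in>V-{u}. ?h x)" using cu by simp
  have e3: "(\<Sum>x\<in>V. ?h x) = ?h u + (\<Sum>x\<in>V-{u}. ?h x)"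
    using sum.remove[OF fin u] by blast
  have e4: "(\<Sum>x\<in>V. ?h x) = r ^ Suc l" by (rule colsum[OF sg reg u])
  show ?thesis using e1 e2 e3 e4 by simp
qed

lemma Hmod:
  assumes u: "u \<in> V" and p: "p > (1::nat)" and k: "r = 1 + p * k" and m: "m \<ge> 1"
  shows "H V E m u u mod p = 1"
proof -
  have rp: "r ^ n mod p = 1" for n
  proof -
    have "(1 + p * k) mod p = 1" using p by (metis add.commute mod_less mod_mult_self2 mult.commute)
    then have "r mod p = 1" using k by simp
    then have "r ^ n mod p = 1 ^ n mod p" by (metis power_mod)
    then show ?thesis using p by simp
  qed
  show ?thesis
  proof (cases m)
    case 0 then show ?thesis using m by simp
  next
    case (Suc m')
    show ?thesis
    proof (cases m')
      case 0
      have "H V E 1 u u = (\<Sum>w\<in>neighbors V E u. H V E 0 w u)" using HSuc[OF sg reg] by simp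
      also have "\<dots> = (\<Sum>w\<in>neighbors V E u. 1)"
        by (rule sum.cong) (auto simp: H0[OF sg reg] neighbors_def dest: Esym[OF sg reg])
      also have "\<dots> = r" using cardN[OF sg reg u] by simp
      finally show ?thesis using Suc 0 rp[of 1] by simp
    next
      case (Suc l)
      have d: "H V E (Suc (Suc l)) u u + H V E l u u = r * H V E l u u + r ^ Suc l" by (rule diag[OF u])
      have "H V E (Suc (Suc l)) u u = p * k * H V E l u u + r ^ Suc l"
        using d unfolding k by (simp add: algebra_simps)
      then have "H V E (Suc (Suc l)) u u mod p = r ^ Suc l mod p"
        by (metis mod_mult_self3 mult.assoc mult.commute)
      then show ?thesis using rp[of "Suc l"] \<open>m = Suc m'\<close> Suc by (simp only:)
    qed
  qed
qed

definition CW :: "nat \<Rightarrow> 'a list set" where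
  "CW p = {xs. length xs = p \<and> walk V E xs \<and> E (last xs) (hd xs)}"

lemma card_CW:
  assumes "p \<ge> 1"
  shows "card (CW p) = (\<Sum>u\<in>V. H V E (p - 1) u u)"
proof -
  let ?S = "\<lambda>u. {xs. length xs = Suc (p - 1) \<and> walk V E xs \<and> hd xs = u \<and> E (last xs) u}"
  have fin: "finite V" by (rule finV[OF sg reg])
  have eq: "CW p = (\<Union>u\<in>V. ?S u)"
  proof (intro set_eqI iffI)
    fix xs assume A: "xs \<in> CW p"
    then have "xs \<noteq> []" "walk V E xs" using assms unfolding CW_def by auto
    then have "hd xs \<in> V" using walk_set by (metis hd_in_set subsetD)
    then show "xs \<in> (\<Union>u\<in>V. ?S u)" using A assms unfolding CW_def by auto
  next
    fix xs assume "xs \<in> (\<Union>u\<in>V. ?S u)"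
    then show "xs \<in> CW p" using assms unfolding CW_def by auto
  qed
  have "card (CW p) = (\<Sum>u\<in>V. card (?S u))"
    unfolding eq by (rule card_UN_disjoint) (auto simp: fin finite_walks[OF fin])
  then show ?thesis unfolding H_def .
qed

lemma rot_CW:
  assumes xs: "xs \<in> CW p" and p: "p \<ge> 2"
  shows "rotate1 xs \<in> CW p" "rotate1 xs \<noteq> xs" "(rotate1 ^^ p) xs = xs"
proof -
  have l: "length xs = p" and w: "walk V E xs" and c: "E (last xs) (hd xs)"
    using xs unfolding CW_def by auto
  obtain x ys where xys: "xs = x # ys" using l p by (cases xs) auto
  have ne: "ys \<noteq> []" using l p xys by auto
  have w2: "x \<in> V" "E x (hd ys)" "walk V E ys" using w xys walk_Cons[OF ne] by blast+
  have c2: "E (last ys) x" using c xys ne by simp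
  have "walk V E (ys @ [x])" using walk_snoc[OF ne] w2 c2 by blast
  moreover have "E (last (ys @ [x])) (hd (ys @ [x]))" using w2 ne by simp
  ultimately show "rotate1 xs \<in> CW p" using l xys unfolding CW_def by simp
  show "rotate1 xs \<noteq> xs"
  proof
    assume "rotate1 xs = xs"
    then have "hd ys = x" using xys ne by (cases ys) auto
    then show False using w2(2) Eirr[OF sg reg] by simp
  qed
  show "(rotate1 ^^ p) xs = xs" using l by (simp add: rotate_def[symmetric] rotate_id)
qed

lemma friendship_false:
  assumes r3: "r \<ge> 3" and cV: "card V = r * (r - 1) + 1"
  shows False
proof -
  have "r - 1 \<noteq> 1" using r3 by simp
  then obtain p where p: "prime p" "p dvd (r - 1)" using prime_factor_nat by blast
  have p1: "p > 1" using p(1) prime_gt_1_nat by blast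
  obtain k where k: "r - 1 = p * k" using p(2) by blast
  have rk: "r = 1 + p * k" using k r3 by simp
  have fin: "finite V" by (rule finV[OF sg reg])
  have "card (CW p) mod p = (\<Sum>u\<in>V. H V E (p - 1) u u mod p) mod p"
    using card_CW p1 by (simp add: mod_sum_eq)
  also have "\<dots> = (\<Sum>u\<in>V. 1) mod p"
    by (rule arg_cong[where f="\<lambda>x. x mod p"], rule sum.cong)
       (use Hmod[OF _ p1 rk] p1 in auto)
  also have "\<dots> = card V mod p" by simp
  also have "\<dots> = 1"
  proof -
    have "card V = p * (k * r) + 1" using cV k by (metis mult.commute mult.left_commute)
    then show ?thesis using p1 by (metis add.commute mod_less mod_mult_self2 mult.commute)
  qed
  finally have m1: "card (CW p) mod p = 1" .
  have "p dvd card (CW p)"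
  proof (rule prime_dvd_card_fpf[where f=rotate1])
    show "finite (CW p)" unfolding CW_def using finite_walks[OF fin] by simp
  qed (use p(1) p1 rot_CW in auto)
  then show False using m1 p1 by simp
qed

end



lemma closure_all:
  assumes conn: "connected_graph V E" and S: "S \<subseteq> V" "s \<in> S"
    and cl: "\<forall>x\<in>S. \<forall>y. E x y \<longrightarrow> y \<in> S"
  shows "V \<subseteq> S"
proof
  fix v assume v: "v \<in> V"
  have "reachable V E s v" using conn S v unfolding connected_graph_def by blast
  then have "(\<lambda>x y. x \<in> V \<and> y \<in> V \<and> E x y)\<^sup>*\<^sup>* s v" unfolding reachable_def by blast
  then show "v \<in> S"
  proof (induction rule: rtranclp_induct)
    case base then show ?case using S by simp
  next
    case (step y z) then show ?case using cl by blast
  qed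
qed

lemma card_filter_sum: "finite A \<Longrightarrow> card {x\<in>A. P x} = (\<Sum>x\<in>A. if P x then 1 else (0::nat))"
proof -
  assume f: "finite A"
  have "card {x\<in>A. P x} = (\<Sum>x\<in>{x\<in>A. P x}. 1)" by simp
  also have "\<dots> = (\<Sum>x\<in>A. if P x then 1 else 0)" using f by (rule sum.inter_filter)
  finally show ?thesis .
qed

lemma arith1: "(r::nat) \<ge> 3 \<Longrightarrow> (r - 1) * (r - 1) + (r - 2) < r * (r - 1)"
proof -
  assume "r \<ge> 3"
  then obtain s where "r = s + 3" by (metis add.commute le_Suc_ex)
  then show ?thesis by (simp add: algebra_simps)
qed

lemma arith2: "(r::nat) \<ge> 1 \<Longrightarrow> (r - 1)^2 + (r - 1) + 1 = r * (r - 1) + 1"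
proof -
  assume "r \<ge> 1"
  then obtain s where "r = Suc s" by (metis Suc_le_D One_nat_def)
  then show ?thesis by (simp add: power2_eq_square)
qed

context
  fixes V :: "'a set" and E r C
  assumes sg: "simple_graph V E" and reg: "regular V E r" and r3: "r \<ge> 3"
    and CV: "C \<subseteq> V"
    and Cclos: "\<forall>v\<in>C. \<forall>u. common_nbr_adj V E v u \<longrightarrow> u \<in> C"
    and cl: "is_complete_on (common_nbr_adj V E) C (r * (r - 1) + 1)"
begin

lemma finC: "finite C" using cl unfolding is_complete_on_def by blast
lemma cardC: "card C = r * (r - 1) + 1" using cl unfolding is_complete_on_def by blast
lemma cliq: "u \<in> C \<Longrightarrow> v \<in> C \<Longrightarrow> u \<noteq> v \<Longrightarrow> \<exists>w\<in>V. E u w \<and> E w v"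
  using cl unfolding is_complete_on_def common_nbr_adj_def by blast

lemma uniq:
  assumes v: "v \<in> C" and x: "x \<in> C" "x \<noteq> v"
    and w1: "E v w1" "E w1 x" and w2: "E v w2" "E w2 x"
  shows "w1 = w2"
proof (rule ccontr)
  assume ne: "w1 \<noteq> w2"
  let ?N = "neighbors V E"
  let ?A = "\<lambda>w. ?N w - {v}"
  have fin: "finite V" by (rule finV[OF sg reg])
  have vV: "v \<in> V" using v CV by blast
  have cA: "card (?A w) = r - 1" if "w \<in> ?N v" for w
  proof -
    have "E w v" using that Esym[OF sg reg] unfolding neighbors_def by blast
    then have "v \<in> ?N w" using vV unfolding neighbors_def by simp
    moreover have "w \<in> V" using that unfolding neighbors_def by blast
    ultimately show ?thesis using cardN[OF sg reg] finN[OF sg reg] by (simp add: card_Diff_singleton)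
  qed
  have sub1: "C - {v} \<subseteq> (\<Union>w\<in>?N v. ?A w)"
  proof
    fix y assume y: "y \<in> C - {v}"
    then obtain w where w: "w \<in> V" "E v w" "E w y" using cliq[OF v, of y] by blast
    have "y \<in> V" using y CV by blast
    then show "y \<in> (\<Union>w\<in>?N v. ?A w)" using w y unfolding neighbors_def by blast
  qed
  have w1N: "w1 \<in> ?N v - {w2}" "w2 \<in> ?N v" using w1 w2 ne EV[OF sg reg] unfolding neighbors_def by auto
  have xA: "x \<in> ?A w1" "x \<in> ?A w2" using w1 w2 x EV[OF sg reg] unfolding neighbors_def by auto
  have sub2: "(\<Union>w\<in>?N v. ?A w) \<subseteq> (\<Union>w\<in>?N v - {w2}. ?A w) \<union> (?A w2 - {x})"
    using xA w1N by blast
  have "card (C - {v}) \<le> card ((\<Union>w\<in>?N v - {w2}. ?A w) \<union> (?A w2 - {x}))"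
    by (rule card_mono) (use finN[OF sg reg] sub1 sub2 in auto)
  also have "\<dots> \<le> card (\<Union>w\<in>?N v - {w2}. ?A w) + card (?A w2 - {x})" by (rule card_Un_le)
  also have "card (\<Union>w\<in>?N v - {w2}. ?A w) \<le> (\<Sum>w\<in>?N v - {w2}. card (?A w))"
    by (rule card_UN_le) (use finN[OF sg reg] in auto)
  also have "(\<Sum>w\<in>?N v - {w2}. card (?A w)) = (\<Sum>w\<in>?N v - {w2}. r - 1)"
    by (rule sum.cong) (use cA in auto)
  also have "\<dots> = (r - 1) * (r - 1)"
    using cardN[OF sg reg vV] w1N finN[OF sg reg] by (simp add: card_Diff_singleton)
  also have "card (?A w2 - {x}) = r - 2" using cA[OF w1N(2)] xA finN[OF sg reg]
    by (simp add: card_Diff_singleton)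
  finally have "card (C - {v}) \<le> (r - 1) * (r - 1) + (r - 2)" by simp
  moreover have "card (C - {v}) = r * (r - 1)" using cardC finC v by (simp add: card_Diff_singleton)
  ultimately show False using arith1[OF r3] by simp
qed

lemma D_sub:
  assumes v: "v \<in> C" and w: "E v w" and y: "E w y"
  shows "y \<in> C"
proof (cases "y = v")
  case True then show ?thesis using v by simp
next
  case False
  have "common_nbr_adj V E v y"
    unfolding common_nbr_adj_def using False v CV w y EV[OF sg reg] by blast
  then show ?thesis using Cclos v by blast
qed


lemma core:
  assumes conn: "connected_graph V E" and Cne: "C \<noteq> {}"
  shows "is_incidence_graph_of_projective_plane V E (r - 1)"
proof -
  let ?N = "neighbors V E"
  define D where "D = {w\<in>V. \<exists>v\<in>C. E v w}"
  have fin: "finite V" by (rule finV[OF sg reg])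
  have DV: "D \<subseteq> V" unfolding D_def by blast
  have Dnb: "y \<in> C" if "d \<in> D" "E d y" for d y
    using that D_sub unfolding D_def by blast
  have Cnb: "y \<in> D" if "c \<in> C" "E c y" for c y
    using that EV[OF sg reg] unfolding D_def by blast
  have disj: "C \<inter> D = {}"
  proof (rule ccontr)
    assume "C \<inter> D \<noteq> {}"
    then obtain t where t: "t \<in> C \<inter> D" by blast
    have "V \<subseteq> C \<inter> D"
      by (rule closure_all[OF conn _ t]) (use CV DV Dnb Cnb in blast)+
    then have VC: "V = C" using CV by blast
    have fr: "\<forall>u\<in>V. \<forall>x\<in>V. u \<noteq> x \<longrightarrow> card {w\<in>V. E u w \<and> E w x} = 1"
    proof (intro ballI impI)
      fix u x assume u: "u \<in> V" and x: "x \<in> V" and ux: "u \<noteq> x"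
      obtain w where w: "w \<in> V" "E u w" "E w x" using cliq[of u x] u x ux VC by blast
      have "{w\<in>V. E u w \<and> E w x} = {w}"
        using w uniq[of u x] u x ux VC by blast
      then show "card {w\<in>V. E u w \<and> E w x} = 1" by simp
    qed
    show False using friendship_false[OF sg reg fr r3] cardC VC by simp
  qed
  have VCD: "V = C \<union> D"
  proof -
    obtain c where c: "c \<in> C" using Cne by blast
    have "V \<subseteq> C \<union> D"
      by (rule closure_all[OF conn _ UnI1[OF c]]) (use CV DV Dnb Cnb in blast)+
    then show ?thesis using CV DV by blast
  qed
  have finD: "finite D" using DV fin finite_subset by blast
  have NC: "?N c = {l\<in>D. E c l}" if "c \<in> C" for c
    unfolding neighbors_def using that Cnb DV by blast
  have ND: "?N d = {p\<in>C. E p d}" if "d \<in> D" for d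
    unfolding neighbors_def using that Dnb CV Esym[OF sg reg] by blast
  have cardNC: "card {l\<in>D. E c l} = r" if "c \<in> C" for c
    using NC[OF that] cardN[OF sg reg, of c] that CV by (simp add: subset_iff)
  have cardND: "card {p\<in>C. E p d} = r" if "d \<in> D" for d
    using ND[OF that] cardN[OF sg reg, of d] that DV by (simp add: subset_iff)
  have cardCD: "card D = card C"
  proof -
    have "r * card C = (\<Sum>c\<in>C. card {l\<in>D. E c l})" using cardNC by simp
    also have "\<dots> = (\<Sum>c\<in>C. \<Sum>l\<in>D. if E c l then 1 else 0)"
      by (rule sum.cong) (use card_filter_sum[OF finD] in auto)
    also have "\<dots> = (\<Sum>l\<in>D. \<Sum>c\<in>C. if E c l then 1 else 0)" by (rule sum.swap)
    also have "\<dots> = (\<Sum>l\<in>D. card {p\<in>C. E p l})"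
      by (rule sum.cong) (use card_filter_sum[OF finC] in auto)
    also have "\<dots> = r * card D" using cardND by simp
    finally show ?thesis using r3 by simp
  qed
  have lineuniq: "\<exists>!l. l \<in> D \<and> E p1 l \<and> E p2 l" if pr: "p1 \<in> C" "p2 \<in> C" "p1 \<noteq> p2" for p1 p2
  proof -
    obtain w where w: "w \<in> V" "E p1 w" "E w p2" using cliq pr by blast
    have wD: "w \<in> D" using Cnb pr w by blast
    show ?thesis
    proof (rule ex1I[of _ w])
      show "w \<in> D \<and> E p1 w \<and> E p2 w" using wD w Esym[OF sg reg] by blast
    next
      fix l assume "l \<in> D \<and> E p1 l \<and> E p2 l"
      then show "l = w" using uniq[of p1 p2 l w] pr w Esym[OF sg reg] by blast
    qed
  qed
  have ptuniq: "\<exists>!p. p \<in> C \<and> E p l1 \<and> E p l2" if l: "l1 \<in> D" "l2 \<in> D" "l1 \<noteq> l2" for l1 l2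
  proof -
    let ?A = "\<lambda>p. ?N p - {l1}"
    have l1V: "l1 \<in> V" using l DV by blast
    have NlC: "?N l1 \<subseteq> C" using ND[OF l(1)] by blast
    have cA: "card (?A p) = r - 1" if "p \<in> ?N l1" for p
    proof -
      have "l1 \<in> ?N p" using that Esym[OF sg reg] l1V unfolding neighbors_def by blast
      moreover have "p \<in> V" using that unfolding neighbors_def by blast
      ultimately show ?thesis using cardN[OF sg reg] finN[OF sg reg] by (simp add: card_Diff_singleton)
    qed
    have dj: "?A p \<inter> ?A p' = {}" if "p \<in> ?N l1" "p' \<in> ?N l1" "p \<noteq> p'" for p p'
    proof (rule ccontr)
      assume "?A p \<inter> ?A p' \<noteq> {}"
      then obtain l where ll: "E p l" "E p' l" "l \<noteq> l1" unfolding neighbors_def by blast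
      have "E l1 p" "E l1 p'" using that unfolding neighbors_def by auto
      then have "l1 = l" using uniq[of p p' l1 l] that NlC ll Esym[OF sg reg] by blast
      then show False using ll by simp
    qed
    have "card (\<Union>p\<in>?N l1. ?A p) = (\<Sum>p\<in>?N l1. card (?A p))"
      by (rule card_UN_disjoint) (use finN[OF sg reg] dj in auto)
    also have "\<dots> = (\<Sum>p\<in>?N l1. r - 1)" by (rule sum.cong) (use cA in auto)
    also have "\<dots> = r * (r - 1)" using cardN[OF sg reg l1V] by simp
    finally have cM: "card (\<Union>p\<in>?N l1. ?A p) = r * (r - 1)" .
    have Msub: "(\<Union>p\<in>?N l1. ?A p) \<subseteq> D - {l1}"
    proof
      fix l assume "l \<in> (\<Union>p\<in>?N l1. ?A p)"
      then obtain p where "p \<in> ?N l1" "E p l" "l \<noteq> l1" unfolding neighbors_def by blast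
      then show "l \<in> D - {l1}" using Cnb NlC by blast
    qed
    have cD1: "card (D - {l1}) = r * (r - 1)" using cardCD cardC l finD by (simp add: card_Diff_singleton)
    have "(\<Union>p\<in>?N l1. ?A p) = D - {l1}"
      by (rule card_subset_eq) (use finD Msub cM cD1 in auto)
    then have "l2 \<in> (\<Union>p\<in>?N l1. ?A p)" using l by blast
    then obtain p where p: "p \<in> ?N l1" "E p l2" unfolding neighbors_def by blast
    have pC: "p \<in> C" "E p l1" using p NlC Esym[OF sg reg] unfolding neighbors_def by auto
    show ?thesis
    proof (rule ex1I[of _ p])
      show "p \<in> C \<and> E p l1 \<and> E p l2" using pC p by blast
    next
      fix p' assume p': "p' \<in> C \<and> E p' l1 \<and> E p' l2"
      show "p' = p"
      proof (rule ccontr)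
        assume "p' \<noteq> p"
        then have "l1 = l2" using uniq[of p' p l1 l2] p' pC p Esym[OF sg reg] by blast
        then show False using l by simp
      qed
    qed
  qed
  have pp: "projective_plane C D E (r - 1)"
    unfolding projective_plane_def
    using finC finD cardC cardCD arith2[of r] r3 cardNC cardND lineuniq ptuniq by auto
  define f where "f = (\<lambda>v. if v \<in> C then Inl v else Inr v :: 'a + 'a)"
  have bij: "bij_betw f V (incidence_vertices C D)"
  proof (rule bij_betwI')
    show "\<And>x y. x \<in> V \<Longrightarrow> y \<in> V \<Longrightarrow> (f x = f y) = (x = y)" unfolding f_def by auto
    show "\<And>x. x \<in> V \<Longrightarrow> f x \<in> incidence_vertices C D"
      unfolding f_def incidence_vertices_def using VCD disj by auto
    show "\<And>y. y \<in> incidence_vertices C D \<Longrightarrow> \<exists>x\<in>V. y = f x"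
      unfolding f_def incidence_vertices_def using VCD disj by auto
  qed
  have adj: "E u v \<longleftrightarrow> incidence_adj C D E (f u) (f v)" if "u \<in> V" "v \<in> V" for u v
  proof -
    have noCC: "\<not> E a b" if "a \<in> C" "b \<in> C" for a b using that Cnb disj by blast
    have noDD: "\<not> E a b" if "a \<in> D" "b \<in> D" for a b using that Dnb disj by blast
    show ?thesis
      using that VCD disj noCC noDD Esym[OF sg reg] unfolding f_def by auto
  qed
  show ?thesis
    unfolding is_incidence_graph_of_projective_plane_def graph_iso_def
    using pp bij adj by blast
qed

end


theorem mainTheorem2:
  fixes V :: "'a set" and E :: "'a \<Rightarrow> 'a \<Rightarrow> bool" and r :: nat
  assumes "r \<ge> 3"
    and "simple_graph V E"
    and "connected_graph V E"
    and "regular V E r"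
    and "\<exists>C. connected_component V (common_nbr_adj V E) C
              \<and> is_complete_on (common_nbr_adj V E) C (r * (r - 1) + 1)"
  shows "is_incidence_graph_of_projective_plane V E (r - 1)"
proof -
  obtain C where cc: "connected_component V (common_nbr_adj V E) C"
    and cl: "is_complete_on (common_nbr_adj V E) C (r * (r - 1) + 1)" using assms(5) by blast
  obtain x where x: "x \<in> V" and C: "C = {y. reachable V (common_nbr_adj V E) x y}"
    using cc unfolding connected_component_def by blast
  have CV: "C \<subseteq> V" unfolding C reachable_def by blast
  have Cne: "C \<noteq> {}" using x unfolding C reachable_def by auto
  have Cclos: "\<forall>v\<in>C. \<forall>u. common_nbr_adj V E v u \<longrightarrow> u \<in> C"
  proof (intro ballI allI impI)
    fix v u assume v: "v \<in> C" and a: "common_nbr_adj V E v u"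
    have uv: "u \<in> V" "v \<in> V" using a unfolding common_nbr_adj_def by auto
    have "(\<lambda>a b. a \<in> V \<and> b \<in> V \<and> common_nbr_adj V E a b)\<^sup>*\<^sup>* x v"
      using v unfolding C reachable_def by blast
    then have "(\<lambda>a b. a \<in> V \<and> b \<in> V \<and> common_nbr_adj V E a b)\<^sup>*\<^sup>* x u"
      using a uv by (simp add: rtranclp.rtrancl_into_rtrancl)
    then show "u \<in> C" unfolding C reachable_def using x uv by blast
  qed
  show ?thesis
    by (rule core[OF assms(2) assms(4) assms(1) CV Cclos cl assms(3) Cne])
qed

end
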